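(* Let $m,n\geq 1$ be integers. Then, as an identity of rational functions in $x$, \[ \sum_{k=1}^{n}\binom{n}{k}\frac{(m-x)_k(x)_{n-k}}{(x-m)_{m+n}k^m} =-\sum_{1\leq k_m\leq k_{m-1}\leq\cdots\leq k_1\leq n}\frac{1}{k_1k_2\cdots k_m (x+k_1-1)(x+k_2-2)\cdots(x+k_m-m)}. \]
   Context: $(x)_N=x(x+1)\cdots(x+N-1)$ denotes the rising factorial, with $(x)_0=1$. *)

theory Defs
  imports Complex_Main
begin

text \<open>Weakly decreasing chains n >= k_1 >= k_2 >= ... >= k_m >= 1, encoded as
  functions nat => nat supported on {1..m} (value 0 outside), so the set is finite.\<close>
definition dec_chains :: "nat \<Rightarrow> nat \<Rightarrow> (nat \<Rightarrow> nat) set" where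
  "dec_chains m n = {k. (\<forall>i\<in>{1..m}. 1 \<le> k i \<and> k i \<le> n)
                       \<and> (\<forall>i. i \<notin> {1..m} \<longrightarrow> k i = 0)
                       \<and> (\<forall>i. 1 \<le> i \<and> i < m \<longrightarrow> k (Suc i) \<le> k i)}"

end

theory Submission
  imports Defs "HOL-Library.FuncSet"
begin

lemma choose_aux:
  fixes k0 j :: nat
  shows "Suc k0 * ((Suc k0 + j) choose Suc k0) = Suc j * ((Suc k0 + j) choose k0)"
proof -
  have "Suc k0 * ((Suc k0 + j) choose Suc k0) = (Suc k0 + j) * ((Suc k0 + j - 1) choose k0)"
    by (rule binomial_absorption)
  also have "\<dots> = (Suc k0 + j - k0) * ((Suc k0 + j) choose k0)"
    by (rule binomial_absorb_comp[symmetric])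
  also have "Suc k0 + j - k0 = Suc j" by simp
  finally show ?thesis .
qed

lemma core:
  fixes x :: complex and k n0 :: nat
  assumes "1 \<le> k" "k \<le> Suc n0"
  shows "of_nat (Suc n0 choose k) * pochhammer x (Suc n0 - k)
         - of_nat (n0 choose k) * pochhammer x (n0 - k) * (x + of_nat n0)
         = of_nat (n0 choose (k - 1)) * pochhammer (x - 1) (Suc n0 - k)"
proof (cases "k = Suc n0")
  case True
  then show ?thesis by simp
next
  case False
  then obtain j where j: "n0 = k + j" using assms by (metis le_Suc_eq le_iff_add)
  obtain k0 where k0: "k = Suc k0" using assms by (cases k) auto
  have e1: "Suc n0 - k = Suc j" "n0 - k = j" using j by auto
  have p1: "pochhammer x (Suc j) = pochhammer x j * (x + of_nat j)" by (rule pochhammer_Suc)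
  have p2: "pochhammer (x - 1) (Suc j) = (x - 1) * pochhammer x j"
    by (simp add: pochhammer_rec)
  have c1: "Suc n0 choose k = (n0 choose k) + (n0 choose k0)" using k0 by simp
  have c2: "of_nat k * of_nat (n0 choose k) = (of_nat j + 1) * (of_nat (n0 choose k0) :: complex)"
  proof -
    have "k * (n0 choose k) = Suc j * (n0 choose k0)" using choose_aux[of k0 j] j k0 by simp
    then have "(of_nat (k * (n0 choose k)) :: complex) = of_nat (Suc j * (n0 choose k0))" by simp
    then show ?thesis by (simp add: algebra_simps)
  qed
  have nk: "(of_nat n0 :: complex) = of_nat k + of_nat j" using j by simp
  define a where "a = (of_nat (n0 choose k) :: complex)"
  define b where "b = (of_nat (n0 choose k0) :: complex)"
  define P where "P = pochhammer x j"
  have "(a + b) * (P * (x + of_nat j)) - a * P * (x + of_nat n0)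
        = P * (b * x + b * of_nat j - of_nat k * a)"
    unfolding nk by (simp add: algebra_simps)
  also have "\<dots> = b * ((x - 1) * P)" using c2 unfolding a_def[symmetric] b_def[symmetric]
    by (simp add: algebra_simps)
  finally have "(a + b) * (P * (x + of_nat j)) - a * P * (x + of_nat n0) = b * ((x - 1) * P)" .
  then show ?thesis
    using k0 unfolding e1 p1 p2 c1 a_def b_def P_def by simp
qed

lemma frac_aux:
  fixes D E K A C1 C0 P1 P0 :: complex
  assumes "D \<noteq> 0" "E \<noteq> 0" "K \<noteq> 0"
  shows "C1 * A * P1 / (D * E * K ^ s) - C0 * A * P0 / (D * K ^ s)
       = A * (C1 * P1 - C0 * P0 * E) / (D * E * K ^ s)"
  using assms by (simp add: field_simps)

lemma frac_aux2:
  fixes D E K N A C1 Cm Q :: complex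
  assumes "D \<noteq> 0" "E \<noteq> 0" "K \<noteq> 0" "N \<noteq> 0" "K * C1 = N * Cm"
  shows "A * (Cm * Q) / (D * E * K ^ Suc s) = C1 * A * Q / (D * K ^ s) / (N * E)"
proof -
  have "Cm = K * C1 / N" using assms by (simp add: field_simps)
  then show ?thesis using assms by (simp add: field_simps)
qed

definition T :: "nat \<Rightarrow> nat \<Rightarrow> complex \<Rightarrow> nat \<Rightarrow> complex" where
  "T m n x k = of_nat (n choose k) * pochhammer (of_nat m - x) k * pochhammer x (n - k)
            / (pochhammer (x - of_nat m) (m + n) * of_nat k ^ m)"

lemma term_rec:
  fixes x :: complex
  assumes k: "1 \<le> k" "k \<le> Suc n0"
    and D: "pochhammer (x - of_nat (Suc m')) (Suc m' + Suc n0) \<noteq> 0"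
  shows "T (Suc m') (Suc n0) x k - T (Suc m') n0 x k
       = T m' (Suc n0) (x - 1) k / (of_nat (Suc n0) * (x + of_nat n0))"
proof -
  define D' where "D' = pochhammer (x - of_nat (Suc m')) (Suc m' + n0)"
  have DD: "pochhammer (x - of_nat (Suc m')) (Suc m' + Suc n0) = D' * (x + of_nat n0)"
    unfolding D'_def by (simp add: pochhammer_Suc)
  have D'nz: "D' \<noteq> 0" and xn: "x + of_nat n0 \<noteq> 0" using D DD by auto
  have Kz: "(of_nat k :: complex) \<noteq> 0" using k by simp
  have e1: "of_nat m' - (x - 1) = of_nat (Suc m') - x" by simp
  have e2: "pochhammer (x - 1 - of_nat m') (m' + Suc n0) = D'"
    unfolding D'_def by (simp add: algebra_simps)
  define A where "A = pochhammer (of_nat (Suc m') - x) k"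
  define C1 where "C1 = (of_nat (Suc n0 choose k) :: complex)"
  define C0 where "C0 = (of_nat (n0 choose k) :: complex)"
  define Cm where "Cm = (of_nat (n0 choose (k - 1)) :: complex)"
  define P1 where "P1 = pochhammer x (Suc n0 - k)"
  define P0 where "P0 = pochhammer x (n0 - k)"
  define Q where "Q = pochhammer (x - 1) (Suc n0 - k)"
  define K where "K = (of_nat k :: complex)"
  have cr: "C1 * P1 - C0 * P0 * (x + of_nat n0) = Cm * Q"
    using core[OF k] unfolding C1_def P1_def C0_def P0_def Cm_def Q_def .
  have ab: "K * C1 = of_nat (Suc n0) * Cm"
  proof -
    have "Suc (k - 1) * (Suc n0 choose Suc (k - 1)) = Suc n0 * (n0 choose (k - 1))"
      using binomial_absorption[of "k - 1" "Suc n0"] by simp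
    then have "k * (Suc n0 choose k) = Suc n0 * (n0 choose (k - 1))" using k by simp
    then have "(of_nat (k * (Suc n0 choose k)) :: complex) = of_nat (Suc n0 * (n0 choose (k - 1)))"
      by simp
    then show ?thesis unfolding K_def C1_def Cm_def by (simp add: algebra_simps)
  qed
  have L: "T (Suc m') (Suc n0) x k - T (Suc m') n0 x k
        = A * (C1 * P1 - C0 * P0 * (x + of_nat n0)) / (D' * (x + of_nat n0) * K ^ Suc m')"
    unfolding T_def DD D'_def[symmetric] A_def[symmetric] C1_def[symmetric] C0_def[symmetric]
      P1_def[symmetric] P0_def[symmetric] K_def[symmetric]
    using frac_aux[OF D'nz xn Kz, of _ _ _ "Suc m'"] unfolding K_def[symmetric] by (simp del: power_Suc)
  have R: "T m' (Suc n0) (x - 1) k / (of_nat (Suc n0) * (x + of_nat n0))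
        = C1 * A * Q / (D' * K ^ m') / (of_nat (Suc n0) * (x + of_nat n0))"
    unfolding T_def e1 e2 A_def[symmetric] C1_def[symmetric] Q_def[symmetric] K_def[symmetric]
    by simp
  show ?thesis unfolding L R cr
    by (rule frac_aux2[OF D'nz xn Kz[folded K_def] of_nat_neq_0 ab])
qed

definition L :: "nat \<Rightarrow> nat \<Rightarrow> complex \<Rightarrow> complex" where
  "L m n x = (\<Sum>k=1..n. T m n x k)"

definition R :: "nat \<Rightarrow> nat \<Rightarrow> complex \<Rightarrow> complex" where
  "R m n x = (\<Sum>k\<in>dec_chains m n. 1 / (\<Prod>i=1..m. of_nat (k i) * (x + of_nat (k i) - of_nat i)))"

lemma L_rec:
  fixes x :: complex
  assumes D: "pochhammer (x - of_nat (Suc m')) (Suc m' + Suc n0) \<noteq> 0"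
  shows "L (Suc m') (Suc n0) x = L (Suc m') n0 x + L m' (Suc n0) (x - 1) / (of_nat (Suc n0) * (x + of_nat n0))"
proof -
  have "L (Suc m') (Suc n0) x = (\<Sum>k=1..Suc n0. T (Suc m') n0 x k
          + T m' (Suc n0) (x - 1) k / (of_nat (Suc n0) * (x + of_nat n0)))"
    unfolding L_def
    by (rule sum.cong[OF refl]) (use term_rec[OF _ _ D] in \<open>auto simp: algebra_simps\<close>)
  also have "\<dots> = (\<Sum>k=1..Suc n0. T (Suc m') n0 x k)
          + (\<Sum>k=1..Suc n0. T m' (Suc n0) (x - 1) k) / (of_nat (Suc n0) * (x + of_nat n0))"
    by (simp only: sum.distrib sum_divide_distrib)
  also have "(\<Sum>k=1..Suc n0. T (Suc m') n0 x k) = L (Suc m') n0 x"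
    unfolding L_def by (simp add: T_def)
  finally show ?thesis unfolding L_def by simp
qed

lemma L_zero:
  fixes x :: complex
  assumes "n \<ge> 1" "pochhammer x n \<noteq> 0"
  shows "L 0 n x = -1"
proof -
  have s: "(\<Sum>k\<le>n. of_nat (n choose k) * pochhammer (-x) k * pochhammer x (n - k)) = 0"
    using pochhammer_binomial_sum[of "-x" x n] assms(1) by (simp add: pochhammer_0_left)
  have "(\<Sum>k\<le>n. of_nat (n choose k) * pochhammer (-x) k * pochhammer x (n - k))
      = pochhammer x n + (\<Sum>k=1..n. of_nat (n choose k) * pochhammer (-x) k * pochhammer x (n - k))"
    by (simp add: atMost_atLeast0 sum.atLeast_Suc_atMost)
  then have "(\<Sum>k=1..n. of_nat (n choose k) * pochhammer (-x) k * pochhammer x (n - k)) = - pochhammer x n"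
    using s by (simp add: add_eq_0_iff)
  then show ?thesis unfolding L_def T_def using assms(2)
    by (simp add: sum_divide_distrib[symmetric])
qed

lemma dec_chains_finite: "finite (dec_chains m n)"
proof -
  have "inj_on (\<lambda>k. restrict k {1..m}) (dec_chains m n)"
  proof (rule inj_onI)
    fix a b assume a: "a \<in> dec_chains m n" and b: "b \<in> dec_chains m n"
      and e: "restrict a {1..m} = restrict b {1..m}"
    show "a = b"
    proof
      fix i
      have "restrict a {1..m} i = restrict b {1..m} i" using e by simp
      then show "a i = b i"
        using a b unfolding dec_chains_def
        by (cases "i \<in> {1..m}") auto
    qed
  qed
  moreover have "(\<lambda>k. restrict k {1..m}) ` dec_chains m n \<subseteq> PiE {1..m} (\<lambda>_. {1..n})"
    unfolding dec_chains_def by auto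
  moreover have "finite (PiE {1..m} (\<lambda>_. {1..n}))" by (rule finite_PiE) auto
  ultimately show ?thesis using inj_on_finite by blast
qed

lemma dec_chains_le1:
  assumes "k \<in> dec_chains m n" "1 \<le> i" "i \<le> m"
  shows "k i \<le> k 1"
  using assms(2,3)
proof (induction i rule: dec_induct)
  case base then show ?case by simp
next
  case (step j)
  then have "k (Suc j) \<le> k j" using assms(1) unfolding dec_chains_def by auto
  with step show ?case by simp
qed

lemma dec_chains_zero: "dec_chains 0 n = {\<lambda>_. 0}"
  unfolding dec_chains_def by auto

lemma dec_chains_empty: "dec_chains (Suc m') 0 = {}"
  unfolding dec_chains_def by force

definition ins :: "nat \<Rightarrow> nat \<Rightarrow> (nat \<Rightarrow> nat) \<Rightarrow> nat \<Rightarrow> nat" where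
  "ins m' n c = (\<lambda>i. if i = 1 then n else if 2 \<le> i \<and> i \<le> Suc m' then c (i - 1) else 0)"

lemma dec_chainsD:
  assumes "k \<in> dec_chains m n"
  shows "\<And>i. 1 \<le> i \<Longrightarrow> i \<le> m \<Longrightarrow> 1 \<le> k i"
    and "\<And>i. 1 \<le> i \<Longrightarrow> i \<le> m \<Longrightarrow> k i \<le> n"
    and "\<And>i. \<not> (1 \<le> i \<and> i \<le> m) \<Longrightarrow> k i = 0"
    and "\<And>i. 1 \<le> i \<Longrightarrow> i < m \<Longrightarrow> k (Suc i) \<le> k i"
  using assms unfolding dec_chains_def by auto

lemma dec_chainsI:
  assumes "\<And>i. 1 \<le> i \<Longrightarrow> i \<le> m \<Longrightarrow> 1 \<le> k i"
    and "\<And>i. 1 \<le> i \<Longrightarrow> i \<le> m \<Longrightarrow> k i \<le> n"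
    and "\<And>i. \<not> (1 \<le> i \<and> i \<le> m) \<Longrightarrow> k i = 0"
    and "\<And>i. 1 \<le> i \<Longrightarrow> i < m \<Longrightarrow> k (Suc i) \<le> k i"
  shows "k \<in> dec_chains m n"
  using assms unfolding dec_chains_def by auto

lemma dec_chains_split:
  "dec_chains (Suc m') (Suc n0) = dec_chains (Suc m') n0 \<union> ins m' (Suc n0) ` dec_chains m' (Suc n0)"
proof (intro equalityI subsetI)
  fix k assume k: "k \<in> dec_chains (Suc m') (Suc n0)"
  note kD = dec_chainsD[OF k]
  show "k \<in> dec_chains (Suc m') n0 \<union> ins m' (Suc n0) ` dec_chains m' (Suc n0)"
  proof (cases "k 1 \<le> n0")
    case True
    have "k \<in> dec_chains (Suc m') n0"
    proof (rule dec_chainsI)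
      fix i assume "1 \<le> i" "i \<le> Suc m'"
      then have "k i \<le> k 1" using dec_chains_le1[OF k, of i] by blast
      then show "k i \<le> n0" using True by linarith
    qed (use kD in auto)
    then show ?thesis by blast
  next
    case False
    then have k1: "k 1 = Suc n0" using kD(2)[of 1] by simp
    define c where "c = (\<lambda>i. if 1 \<le> i \<and> i \<le> m' then k (Suc i) else 0)"
    have "c \<in> dec_chains m' (Suc n0)"
    proof (rule dec_chainsI)
      fix i assume "1 \<le> i" "i \<le> m'"
      then show "1 \<le> c i" "c i \<le> Suc n0" using kD(1,2)[of "Suc i"] by (auto simp: c_def)
    next
      fix i assume "1 \<le> i" "i < m'"
      then show "c (Suc i) \<le> c i" using kD(4)[of "Suc i"] by (auto simp: c_def)
    qed (auto simp: c_def)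
    moreover have "ins m' (Suc n0) c = k"
    proof
      fix i show "ins m' (Suc n0) c i = k i"
      proof (cases "i = 1")
        case True then show ?thesis using k1 by (simp add: ins_def)
      next
        case F: False
        show ?thesis
        proof (cases "2 \<le> i \<and> i \<le> Suc m'")
          case True
          then have "1 \<le> i - 1 \<and> i - 1 \<le> m'" "Suc (i - 1) = i" by auto
          then show ?thesis using F True by (simp add: ins_def c_def)
        next
          case False
          then have "\<not> (1 \<le> i \<and> i \<le> Suc m')" using F by auto
          then have "k i = 0" by (rule kD(3))
          then show ?thesis using F False by (auto simp add: ins_def)
        qed
      qed
    qed
    ultimately show ?thesis by blast
  qed
next
  fix k assume "k \<in> dec_chains (Suc m') n0 \<union> ins m' (Suc n0) ` dec_chains m' (Suc n0)"
  then show "k \<in> dec_chains (Suc m') (Suc n0)"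
  proof
    assume "k \<in> dec_chains (Suc m') n0"
    note kD = dec_chainsD[OF this]
    show ?thesis by (rule dec_chainsI) (use kD in \<open>auto intro: le_SucI\<close>)
  next
    assume "k \<in> ins m' (Suc n0) ` dec_chains m' (Suc n0)"
    then obtain c where c: "c \<in> dec_chains m' (Suc n0)" and kc: "k = ins m' (Suc n0) c" by blast
    note cD = dec_chainsD[OF c]
    show ?thesis
    proof (rule dec_chainsI)
      fix i assume i: "1 \<le> i" "i \<le> Suc m'"
      show "1 \<le> k i" using i cD(1)[of "i - 1"] by (simp add: kc ins_def)
      show "k i \<le> Suc n0" using i cD(2)[of "i - 1"] by (simp add: kc ins_def)
    next
      fix i assume "\<not> (1 \<le> i \<and> i \<le> Suc m')"
      then show "k i = 0" by (auto simp add: kc ins_def)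
    next
      fix i assume i: "1 \<le> i" "i < Suc m'"
      show "k (Suc i) \<le> k i"
      proof (cases "i = 1")
        case True then show ?thesis using cD(2)[of 1] i by (simp add: kc ins_def)
      next
        case False
        then have "c (Suc (i - 1)) \<le> c (i - 1)" using cD(4)[of "i - 1"] i by simp
        then show ?thesis using i False by (simp add: kc ins_def)
      qed
    qed
  qed
qed

lemma R_zero: "R 0 n x = 1"
  unfolding R_def dec_chains_zero by simp

lemma R_empty: "R (Suc m') 0 x = 0"
  unfolding R_def dec_chains_empty by simp

lemma L_empty: "L m 0 x = 0"
  unfolding L_def by simp

lemma ins_prod:
  fixes x :: complex
  shows "(\<Prod>i=1..Suc m'. of_nat (ins m' n c i) * (x + of_nat (ins m' n c i) - of_nat i))
       = (of_nat n * (x + of_nat n - 1)) * (\<Prod>i=1..m'. of_nat (c i) * ((x - 1) + of_nat (c i) - of_nat i))"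
proof -
  have "(\<Prod>i=1..Suc m'. of_nat (ins m' n c i) * (x + of_nat (ins m' n c i) - of_nat i))
     = (of_nat n * (x + of_nat n - 1)) * (\<Prod>i=Suc 1..Suc m'. of_nat (ins m' n c i) * (x + of_nat (ins m' n c i) - of_nat i))"
    by (subst prod.atLeast_Suc_atMost) (auto simp: ins_def)
  also have "(\<Prod>i=Suc 1..Suc m'. of_nat (ins m' n c i) * (x + of_nat (ins m' n c i) - of_nat i))
      = (\<Prod>i=1..m'. of_nat (ins m' n c (Suc i)) * (x + of_nat (ins m' n c (Suc i)) - of_nat (Suc i)))"
    by (rule prod.shift_bounds_cl_Suc_ivl)
  also have "\<dots> = (\<Prod>i=1..m'. of_nat (c i) * ((x - 1) + of_nat (c i) - of_nat i))"
    by (rule prod.cong[OF refl]) (auto simp: ins_def algebra_simps)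
  finally show ?thesis .
qed

lemma R_rec:
  fixes x :: complex
  shows "R (Suc m') (Suc n0) x = R (Suc m') n0 x + R m' (Suc n0) (x - 1) / (of_nat (Suc n0) * (x + of_nat n0))"
proof -
  let ?f = "\<lambda>k. 1 / (\<Prod>i=1..Suc m'. of_nat (k i) * (x + of_nat (k i) - of_nat i))"
  have disj: "dec_chains (Suc m') n0 \<inter> ins m' (Suc n0) ` dec_chains m' (Suc n0) = {}"
  proof (rule ccontr)
    assume "\<not> ?thesis"
    then obtain c where "ins m' (Suc n0) c \<in> dec_chains (Suc m') n0" by blast
    from dec_chainsD(2)[OF this, of 1] show False by (simp add: ins_def)
  qed
  have inj: "inj_on (ins m' (Suc n0)) (dec_chains m' (Suc n0))"
  proof (rule inj_onI)
    fix a b assume a: "a \<in> dec_chains m' (Suc n0)" and b: "b \<in> dec_chains m' (Suc n0)"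
      and e: "ins m' (Suc n0) a = ins m' (Suc n0) b"
    show "a = b"
    proof
      fix i
      show "a i = b i"
      proof (cases "1 \<le> i \<and> i \<le> m'")
        case True
        have "ins m' (Suc n0) a (Suc i) = ins m' (Suc n0) b (Suc i)" using e by simp
        then show ?thesis using True by (simp add: ins_def)
      next
        case False then show ?thesis using dec_chainsD(3)[OF a] dec_chainsD(3)[OF b] by simp
      qed
    qed
  qed
  have "R (Suc m') (Suc n0) x = sum ?f (dec_chains (Suc m') n0) + sum ?f (ins m' (Suc n0) ` dec_chains m' (Suc n0))"
    unfolding R_def dec_chains_split
    by (rule sum.union_disjoint) (auto simp: dec_chains_finite disj)
  also have "sum ?f (ins m' (Suc n0) ` dec_chains m' (Suc n0)) = sum (?f \<circ> ins m' (Suc n0)) (dec_chains m' (Suc n0))"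
    by (rule sum.reindex[OF inj])
  also have "\<dots> = (\<Sum>c\<in>dec_chains m' (Suc n0). (1 / (\<Prod>i=1..m'. of_nat (c i) * ((x - 1) + of_nat (c i) - of_nat i)))
                 / (of_nat (Suc n0) * (x + of_nat n0)))"
    by (rule sum.cong[OF refl]) (simp only: comp_def ins_prod, simp add: mult.commute)
  also have "\<dots> = R m' (Suc n0) (x - 1) / (of_nat (Suc n0) * (x + of_nat n0))"
    unfolding R_def by (simp add: sum_divide_distrib)
  finally show ?thesis unfolding R_def by simp
qed

lemma main:
  fixes x :: complex
  assumes "pochhammer (x - of_nat m) (m + n) \<noteq> 0" "1 \<le> m \<or> 1 \<le> n"
  shows "L m n x = - R m n x"
  using assms
proof (induction m arbitrary: n x)
  case 0
  then show ?case using L_zero[of n x] R_zero[of n x] by simp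
next
  case (Suc m')
  have IHm: "\<And>n x. pochhammer (x - of_nat m') (m' + n) \<noteq> 0 \<Longrightarrow> 1 \<le> n \<Longrightarrow> L m' n x = - R m' n x"
    using Suc.IH by blast
  show ?case using Suc.prems(1)
  proof (induction n)
    case 0
    then show ?case by (simp add: L_empty R_empty)
  next
    case (Suc n0)
    have DD: "pochhammer (x - of_nat (Suc m')) (Suc m' + Suc n0)
        = pochhammer (x - of_nat (Suc m')) (Suc m' + n0) * (x + of_nat n0)"
      by (simp add: pochhammer_Suc)
    have D': "pochhammer (x - of_nat (Suc m')) (Suc m' + n0) \<noteq> 0" using Suc.prems DD by simp
    have e: "pochhammer (x - 1 - of_nat m') (m' + Suc n0) = pochhammer (x - of_nat (Suc m')) (Suc m' + n0)"
      by (simp add: algebra_simps)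
    have h1: "L (Suc m') n0 x = - R (Suc m') n0 x" using Suc.IH D' by blast
    have h2: "L m' (Suc n0) (x - 1) = - R m' (Suc n0) (x - 1)"
      using IHm[of "x - 1" "Suc n0"] e D' by simp
    show ?case unfolding L_rec[OF Suc.prems] R_rec h1 h2 by (simp add: field_simps)
  qed
qed

theorem corollary5p1:
  fixes m n :: nat and x :: complex
  assumes "m \<ge> 1" and "n \<ge> 1"
    and "pochhammer (x - of_nat m) (m + n) \<noteq> 0"
  shows "(\<Sum>k=1..n. of_nat (n choose k) * pochhammer (of_nat m - x) k * pochhammer x (n - k)
            / (pochhammer (x - of_nat m) (m + n) * of_nat k ^ m))
       = - (\<Sum>k\<in>dec_chains m n.
              1 / (\<Prod>i=1..m. of_nat (k i) * (x + of_nat (k i) - of_nat i)))"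
  using main[OF assms(3)] assms(1) unfolding L_def T_def R_def by simp

end
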